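(* Let $\Omega=(0,1)\times(0,1)\subset\mathbb{R}^2$ and let $h:[0,1]\to\mathbb{R}$ be a bounded function with $h(0)=0$, $h(x_1)>0$ for $x_1\in(0,1]$, $h\in C^1(0,1]$, and suppose there exist constants $C>0$ and $\theta\in(0,1)$ such that $$\sup_{x\in\Omega,\ 0<r\le d}\frac{\int_{B(x,r)\cap\Omega}h(x_1)^{-1}\,dx}{|B(x,r)\cap\Omega|^{\theta}}\le C,$$ where $d$ is the diameter of $\Omega$. Then $$H_0^1(\Omega)\subset\mathcal{H}_{h,0}^1(\Omega)\subset\mathcal{H}_h^1(\Omega)\cap W_0^{1,1}(\Omega).$$
   Context: $B(x,r)$ is the Euclidean ball with center $x$ and radius $r$, $|\cdot|$ is Lebesgue measure. $\mathcal{H}_h^1(\Omega)=\{u\in L^2(\Omega)\mid \partial_{x_1}u\in L^2(\Omega),\ \sqrt{h(x_1)}\,\partial_{x_2}u\in L^2(\Omega)\}$ (distributional derivatives), with norm $\|u\|_{\mathcal{H}_h^1(\Omega)}=\big(\|u\|_{L^2(\Omega)}^2+\|\partial_{x_1}u\|_{L^2(\Omega)}^2+\|\sqrt{h(x_1)}\partial_{x_2}u\|_{L^2(\Omega)}^2\big)^{1/2}$. $\mathcal{H}_{h,0}^1(\Omega)$ is the closure of $C_0^\infty(\Omega)$ in $\mathcal{H}_h^1(\Omega)$. *)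

theory Defs
  imports "HOL-Analysis.Analysis"
begin

text \<open>Points of R^2 are pairs (x1,x2) :: real \<times> real; the product norm is Euclidean,
  so ball x r is the Euclidean ball. Lebesgue measure is lebesgue on real \<times> real.\<close>

definition Omega :: "(real \<times> real) set" where
  "Omega = {0<..<1} \<times> {0<..<1}"

definition pd1 :: "(real \<times> real \<Rightarrow> real) \<Rightarrow> real \<times> real \<Rightarrow> real" where
  "pd1 f x = frechet_derivative f (at x) (1, 0)"

definition pd2 :: "(real \<times> real \<Rightarrow> real) \<Rightarrow> real \<times> real \<Rightarrow> real" where
  "pd2 f x = frechet_derivative f (at x) (0, 1)"

text \<open>C-infinity on R^2: differentiable everywhere, and so are all iterated partials.\<close>
coinductive smooth2 :: "(real \<times> real \<Rightarrow> real) \<Rightarrow> bool" where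
  "(\<forall>x. f differentiable (at x)) \<Longrightarrow> smooth2 (pd1 f) \<Longrightarrow> smooth2 (pd2 f) \<Longrightarrow> smooth2 f"

definition test_fun :: "(real \<times> real) set \<Rightarrow> (real \<times> real \<Rightarrow> real) \<Rightarrow> bool" where
  "test_fun U \<phi> \<longleftrightarrow> smooth2 \<phi> \<and> compact (closure {x. \<phi> x \<noteq> 0})
      \<and> closure {x. \<phi> x \<noteq> 0} \<subseteq> U"

definition Lp_on :: "real \<Rightarrow> (real \<times> real) set \<Rightarrow> (real \<times> real \<Rightarrow> real) \<Rightarrow> bool" where
  "Lp_on p U f \<longleftrightarrow> set_borel_measurable lebesgue U f
      \<and> set_integrable lebesgue U (\<lambda>x. \<bar>f x\<bar> powr p)"

definition loc_int :: "(real \<times> real) set \<Rightarrow> (real \<times> real \<Rightarrow> real) \<Rightarrow> bool" where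
  "loc_int U f \<longleftrightarrow> (\<forall>K. compact K \<and> K \<subseteq> U \<longrightarrow> set_integrable lebesgue K f)"

definition weak_pd :: "nat \<Rightarrow> (real \<times> real) set \<Rightarrow> (real \<times> real \<Rightarrow> real)
    \<Rightarrow> (real \<times> real \<Rightarrow> real) \<Rightarrow> bool" where
  "weak_pd i U u g \<longleftrightarrow> loc_int U u \<and> loc_int U g \<and>
     (\<forall>\<phi>. test_fun U \<phi> \<longrightarrow>
        (LINT x:U|lebesgue. u x * (if i = 1 then pd1 \<phi> x else pd2 \<phi> x))
          = - (LINT x:U|lebesgue. g x * \<phi> x))"

definition Hh1 :: "(real \<Rightarrow> real) \<Rightarrow> (real \<times> real \<Rightarrow> real) \<Rightarrow> bool" where
  "Hh1 h u \<longleftrightarrow> Lp_on 2 Omega u \<and>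
     (\<exists>g1 g2. weak_pd 1 Omega u g1 \<and> weak_pd 2 Omega u g2 \<and>
        Lp_on 2 Omega g1 \<and> Lp_on 2 Omega (\<lambda>x. sqrt (h (fst x)) * g2 x))"

text \<open>H^1_{h,0}(Omega): closure of C_0^infinity(Omega) in the H^1_h norm
  (the squared norm of u - phi_n tends to 0).\<close>
definition Hh10 :: "(real \<Rightarrow> real) \<Rightarrow> (real \<times> real \<Rightarrow> real) \<Rightarrow> bool" where
  "Hh10 h u \<longleftrightarrow> Hh1 h u \<and>
     (\<exists>g1 g2 \<phi>. weak_pd 1 Omega u g1 \<and> weak_pd 2 Omega u g2 \<and>
        Lp_on 2 Omega g1 \<and> Lp_on 2 Omega (\<lambda>x. sqrt (h (fst x)) * g2 x) \<and>
        (\<forall>n. test_fun Omega (\<phi> n)) \<and>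
        (\<lambda>n. (LINT x:Omega|lebesgue. (u x - \<phi> n x)^2)
            + (LINT x:Omega|lebesgue. (g1 x - pd1 (\<phi> n) x)^2)
            + (LINT x:Omega|lebesgue. h (fst x) * (g2 x - pd2 (\<phi> n) x)^2))
          \<longlonglongrightarrow> 0)"

definition H10 :: "(real \<times> real \<Rightarrow> real) \<Rightarrow> bool" where
  "H10 u \<longleftrightarrow> Hh10 (\<lambda>_. 1) u"

text \<open>W^{1,1}_0(Omega): closure of C_0^infinity(Omega) in W^{1,1}(Omega).\<close>
definition W110 :: "(real \<times> real \<Rightarrow> real) \<Rightarrow> bool" where
  "W110 u \<longleftrightarrow> Lp_on 1 Omega u \<and>
     (\<exists>g1 g2 \<phi>. weak_pd 1 Omega u g1 \<and> weak_pd 2 Omega u g2 \<and>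
        Lp_on 1 Omega g1 \<and> Lp_on 1 Omega g2 \<and>
        (\<forall>n. test_fun Omega (\<phi> n)) \<and>
        (\<lambda>n. (LINT x:Omega|lebesgue. \<bar>u x - \<phi> n x\<bar>)
            + (LINT x:Omega|lebesgue. \<bar>g1 x - pd1 (\<phi> n) x\<bar>)
            + (LINT x:Omega|lebesgue. \<bar>g2 x - pd2 (\<phi> n) x\<bar>))
          \<longlonglongrightarrow> 0)"

end

theory Submission
  imports Defs
begin

abbreviation "N \<equiv> lebesgue_on Omega"

lemma Omega_open: "open Omega"
  unfolding Omega_def by (simp add: open_Times)

lemma Omega_borel: "Omega \<in> sets borel"
  using Omega_open by (simp add: borel_open)

lemma Omega_sets: "Omega \<in> sets lebesgue"
  using Omega_borel by (simp add: sets_completionI_sets sets_lborel)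

lemma Omega_sub: "Omega \<subseteq> cball 0 2"
proof
  fix x assume "x \<in> Omega"
  then have "\<bar>fst x\<bar> < 1" "\<bar>snd x\<bar> < 1" unfolding Omega_def by (auto simp: mem_Times_iff)
  then have "norm x \<le> norm (fst x) + norm (snd x)" by (metis norm_Pair_le prod.collapse)
  then show "x \<in> cball 0 2" using \<open>\<bar>fst x\<bar> < 1\<close> \<open>\<bar>snd x\<bar> < 1\<close> by (simp add: dist_norm)
qed

lemma Omega_fin: "emeasure lebesgue Omega < \<infinity>"
proof -
  have "emeasure lebesgue Omega = emeasure lborel Omega"
    using Omega_sets Omega_borel by (simp add: emeasure_completion main_part_sets sets_lborel)
  also have "\<dots> < \<infinity>"
    by (meson Omega_sub bounded_cball bounded_subset emeasure_bounded_finite)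
  finally show ?thesis .
qed

lemma N_fin: "finite_measure N"
  using Omega_fin Omega_sets
  by (intro finite_measureI) (simp add: emeasure_restrict_space space_restrict_space)

lemma sbm_iff: fixes f :: "real \<times> real \<Rightarrow> real" shows "set_borel_measurable lebesgue Omega f \<longleftrightarrow> f \<in> borel_measurable N"
  unfolding set_borel_measurable_def
  by (rule borel_measurable_restrict_space_iff[symmetric]) (simp add: Omega_sets)

lemma si_iff: fixes f :: "real \<times> real \<Rightarrow> real" shows "set_integrable lebesgue Omega f \<longleftrightarrow> integrable N f"
  unfolding set_integrable_def
  by (rule integrable_restrict_space[symmetric]) (simp add: Omega_sets)

lemma sint_eq: fixes f :: "real \<times> real \<Rightarrow> real" shows "(LINT x:Omega|lebesgue. f x) = integral\<^sup>L N f"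
  unfolding set_lebesgue_integral_def
  by (rule integral_restrict_space[symmetric]) (simp add: Omega_sets)

lemma spaceN: "space N = Omega" by simp

lemma amgm_pt:
  fixes a w f :: real
  assumes "a > 0" "w > 0"
  shows "\<bar>f\<bar> \<le> a/2 * (1/w) + 1/(2*a) * (w * f^2)"
proof -
  define p where "p = a / w"
  have p: "p > 0" using assms by (simp add: p_def)
  have "0 \<le> (p - \<bar>f\<bar>)^2 / p" using p by simp
  also have "(p - \<bar>f\<bar>)^2 / p = p - 2*\<bar>f\<bar> + f^2/p"
    using p by (simp add: power2_eq_square field_simps)
  finally have "2*\<bar>f\<bar> \<le> p + f^2/p" by simp
  moreover have e: "a/2 * (1/w) + 1/(2*a) * (w * f^2) = (p + f^2/p) / 2"
    using assms by (simp add: p_def field_simps power2_eq_square)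
  ultimately show ?thesis unfolding e by (simp add: field_simps)
qed

lemma L1bound:
  fixes M :: "'a measure" and w f :: "'a \<Rightarrow> real"
  assumes w: "w \<in> borel_measurable M" and wpos: "\<forall>x\<in>space M. w x > 0"
    and iw: "integrable M (\<lambda>x. 1 / w x)" and f: "f \<in> borel_measurable M"
    and iwf: "integrable M (\<lambda>x. w x * (f x)^2)" and a: "a > 0"
  shows "integrable M (\<lambda>x. \<bar>f x\<bar>)"
    and "integral\<^sup>L M (\<lambda>x. \<bar>f x\<bar>) \<le> a/2 * integral\<^sup>L M (\<lambda>x. 1 / w x) + 1/(2*a) * integral\<^sup>L M (\<lambda>x. w x * (f x)^2)"
proof -
  have ib: "integrable M (\<lambda>x. a/2 * (1 / w x) + 1/(2*a) * (w x * (f x)^2))"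
    using iw iwf by (intro Bochner_Integration.integrable_add integrable_mult_right)
  have pt: "\<forall>x\<in>space M. \<bar>f x\<bar> \<le> a/2 * (1 / w x) + 1/(2*a) * (w x * (f x)^2)"
    using amgm_pt a wpos by blast
  show i: "integrable M (\<lambda>x. \<bar>f x\<bar>)"
  proof (rule Bochner_Integration.integrable_bound[OF ib])
    show "(\<lambda>x. \<bar>f x\<bar>) \<in> borel_measurable M" using f by measurable
    show "AE x in M. norm \<bar>f x\<bar> \<le> norm (a/2 * (1 / w x) + 1/(2*a) * (w x * (f x)^2))"
      using pt by (intro AE_I2) (auto intro: order_trans[OF _ abs_ge_self])
  qed
  have "integral\<^sup>L M (\<lambda>x. \<bar>f x\<bar>) \<le> integral\<^sup>L M (\<lambda>x. a/2 * (1 / w x) + 1/(2*a) * (w x * (f x)^2))"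
    using i ib pt by (intro integral_mono) auto
  also have "\<dots> = a/2 * integral\<^sup>L M (\<lambda>x. 1 / w x) + 1/(2*a) * integral\<^sup>L M (\<lambda>x. w x * (f x)^2)"
    using iw iwf by (simp only: Bochner_Integration.integral_add integrable_mult_right integral_mult_right_zero)
  finally show "integral\<^sup>L M (\<lambda>x. \<bar>f x\<bar>) \<le> a/2 * integral\<^sup>L M (\<lambda>x. 1 / w x) + 1/(2*a) * integral\<^sup>L M (\<lambda>x. w x * (f x)^2)" .
qed

lemma L1conv:
  fixes M :: "'a measure" and w :: "'a \<Rightarrow> real" and f :: "nat \<Rightarrow> 'a \<Rightarrow> real"
  assumes w: "w \<in> borel_measurable M" and wpos: "\<forall>x\<in>space M. w x > 0"
    and iw: "integrable M (\<lambda>x. 1 / w x)" and f: "\<And>n. f n \<in> borel_measurable M"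
    and iwf: "\<And>n. integrable M (\<lambda>x. w x * (f n x)^2)"
    and lim: "(\<lambda>n. integral\<^sup>L M (\<lambda>x. w x * (f n x)^2)) \<longlonglongrightarrow> 0"
  shows "(\<lambda>n. integral\<^sup>L M (\<lambda>x. \<bar>f n x\<bar>)) \<longlonglongrightarrow> 0"
proof (rule LIMSEQ_I)
  fix r :: real assume r: "r > 0"
  define I where "I = integral\<^sup>L M (\<lambda>x. 1 / w x)"
  have I0: "I \<ge> 0" unfolding I_def using wpos by (intro integral_nonneg_AE AE_I2) auto
  define a where "a = r / (I + 1)"
  have a: "a > 0" using r I0 by (simp add: a_def)
  have aI: "a/2 * I < r/2" using r I0 by (simp add: a_def field_simps)
  obtain n0 where n0: "\<And>n. n \<ge> n0 \<Longrightarrow> norm (integral\<^sup>L M (\<lambda>x. w x * (f n x)^2) - 0) < r * a"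
    using LIMSEQ_D[OF lim, of "r * a"] r a by auto
  show "\<exists>no. \<forall>n\<ge>no. norm (integral\<^sup>L M (\<lambda>x. \<bar>f n x\<bar>) - 0) < r"
  proof (intro exI allI impI)
    fix n assume "n \<ge> n0"
    then have J: "integral\<^sup>L M (\<lambda>x. w x * (f n x)^2) < r * a" using n0[of n] by (simp add: abs_less_iff)
    have b: "integral\<^sup>L M (\<lambda>x. \<bar>f n x\<bar>) \<le> a/2 * I + 1/(2*a) * integral\<^sup>L M (\<lambda>x. w x * (f n x)^2)"
      unfolding I_def by (rule L1bound(2)[OF w wpos iw f iwf a])
    have "1/(2*a) * integral\<^sup>L M (\<lambda>x. w x * (f n x)^2) < 1/(2*a) * (r * a)"
      using J a by (intro mult_strict_left_mono) auto
    also have "\<dots> = r/2" using a by simp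
    finally have "integral\<^sup>L M (\<lambda>x. \<bar>f n x\<bar>) < r" using b aI by linarith
    moreover have "integral\<^sup>L M (\<lambda>x. \<bar>f n x\<bar>) \<ge> 0" by simp
    ultimately show "norm (integral\<^sup>L M (\<lambda>x. \<bar>f n x\<bar>) - 0) < r" by simp
  qed
qed

lemma intN_const: "integrable N (\<lambda>x. c::real)"
  using N_fin finite_measure.integrable_const by blast

lemma intN_bound:
  fixes f :: "real \<times> real \<Rightarrow> real"
  assumes "f \<in> borel_measurable N" "\<forall>x\<in>Omega. \<bar>f x\<bar> \<le> B"
  shows "integrable N f"
  using assms by (intro finite_measure.integrable_const_bound[OF N_fin, of f B]) (auto intro!: AE_I2)

lemma smooth_cont: "smooth2 f \<Longrightarrow> continuous_on UNIV f"
  by (erule smooth2.cases) (auto intro!: continuous_at_imp_continuous_on differentiable_imp_continuous_within)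

lemma test_props:
  assumes "test_fun Omega \<phi>"
  shows "continuous_on UNIV \<phi>" "continuous_on UNIV (pd1 \<phi>)" "continuous_on UNIV (pd2 \<phi>)"
proof -
  have s: "smooth2 \<phi>" using assms by (simp add: test_fun_def)
  then show "continuous_on UNIV \<phi>" by (rule smooth_cont)
  from s show "continuous_on UNIV (pd1 \<phi>)" by (cases rule: smooth2.cases) (auto intro: smooth_cont)
  from s show "continuous_on UNIV (pd2 \<phi>)" by (cases rule: smooth2.cases) (auto intro: smooth_cont)
qed

lemma cont_meas: "continuous_on UNIV (p :: real \<times> real \<Rightarrow> real) \<Longrightarrow> p \<in> borel_measurable N"
  by (rule continuous_imp_measurable_on_sets_lebesgue[OF continuous_on_subset Omega_sets]) auto

lemma cont_bdd:
  assumes "continuous_on UNIV (p :: real \<times> real \<Rightarrow> real)"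
  shows "\<exists>B. \<forall>x\<in>Omega. \<bar>p x\<bar> \<le> B"
proof -
  have "compact (p ` cball 0 2)"
    by (rule compact_continuous_image[OF continuous_on_subset[OF assms]]) auto
  then obtain B where "\<forall>y\<in>p ` cball 0 2. norm y \<le> B"
    using compact_imp_bounded bounded_iff by metis
  then show ?thesis using Omega_sub by auto
qed


lemma sqB:
  fixes w g p :: "real \<times> real \<Rightarrow> real"
  assumes "w \<in> borel_measurable N" "g \<in> borel_measurable N" "p \<in> borel_measurable N"
    and "\<forall>x\<in>Omega. 0 \<le> w x \<and> w x \<le> W" "\<forall>x\<in>Omega. \<bar>p x\<bar> \<le> B"
    and "integrable N (\<lambda>x. w x * (g x)^2)"
  shows "integrable N (\<lambda>x. w x * (g x - p x)^2)"
proof (rule Bochner_Integration.integrable_bound)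
  show "integrable N (\<lambda>x. 2 * (w x * (g x)^2) + 2 * W * B^2)"
    using assms(6) intN_const by (intro Bochner_Integration.integrable_add integrable_mult_right) auto
  show "(\<lambda>x. w x * (g x - p x)^2) \<in> borel_measurable N" using assms(1-3) by measurable
  show "AE x in N. norm (w x * (g x - p x)^2) \<le> norm (2 * (w x * (g x)^2) + 2 * W * B^2)"
  proof (rule AE_I2)
    fix x assume "x \<in> space N"
    then have x: "x \<in> Omega" by simp
    have w: "0 \<le> w x" "w x \<le> W" and p: "\<bar>p x\<bar> \<le> B" using assms(4,5) x by auto
    have e: "(g x - p x)^2 + (g x + p x)^2 = 2 * (g x)^2 + 2 * (p x)^2"
      by (simp add: power2_sum power2_diff)
    have "(g x - p x)^2 \<le> 2 * (g x)^2 + 2 * (p x)^2"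
      using e zero_le_power2[of "g x + p x"] by linarith
    also have "(p x)^2 \<le> B^2" using power_mono[OF p abs_ge_zero, of 2] by simp
    hence "2 * (g x)^2 + 2 * (p x)^2 \<le> 2 * (g x)^2 + 2 * B^2" by simp
    finally have a: "(g x - p x)^2 \<le> 2 * (g x)^2 + 2 * B^2" .
    have "w x * (g x - p x)^2 \<le> w x * (2 * (g x)^2 + 2 * B^2)"
      using a w by (intro mult_left_mono) auto
    also have "\<dots> \<le> 2 * (w x * (g x)^2) + 2 * W * B^2"
    proof -
      have "w x * B^2 \<le> W * B^2" using w by (intro mult_right_mono) auto
      then show ?thesis by (simp add: distrib_left)
    qed
    finally have b: "w x * (g x - p x)^2 \<le> 2 * (w x * (g x)^2) + 2 * W * B^2" .
    have "0 \<le> w x * (g x - p x)^2" using w by simp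
    then show "norm (w x * (g x - p x)^2) \<le> norm (2 * (w x * (g x)^2) + 2 * W * B^2)"
      using b by simp
  qed
qed


lemma Lp2_iff: "Lp_on 2 Omega u \<longleftrightarrow> u \<in> borel_measurable N \<and> integrable N (\<lambda>x. (u x)^2)"
  unfolding Lp_on_def sbm_iff si_iff by simp

lemma Lp1_iff: "Lp_on 1 Omega u \<longleftrightarrow> u \<in> borel_measurable N \<and> integrable N (\<lambda>x. \<bar>u x\<bar>)"
  unfolding Lp_on_def sbm_iff si_iff by simp

lemma tendsto_part:
  fixes a b c :: "nat \<Rightarrow> real"
  assumes "\<And>n. a n \<ge> 0" "\<And>n. b n \<ge> 0" "\<And>n. c n \<ge> 0" "(\<lambda>n. a n + b n + c n) \<longlonglongrightarrow> 0"
  shows "a \<longlonglongrightarrow> 0" "b \<longlonglongrightarrow> 0" "c \<longlonglongrightarrow> 0"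
proof -
  have z: "(\<lambda>n. 0::real) \<longlonglongrightarrow> 0" by simp
  show "a \<longlonglongrightarrow> 0"
    by (rule tendsto_sandwich[OF _ _ z assms(4)]) (use assms in \<open>auto intro!: always_eventually\<close>)
  show "b \<longlonglongrightarrow> 0"
    by (rule tendsto_sandwich[OF _ _ z assms(4)]) (use assms in \<open>auto intro!: always_eventually\<close>)
  show "c \<longlonglongrightarrow> 0"
    by (rule tendsto_sandwich[OF _ _ z assms(4)]) (use assms in \<open>auto intro!: always_eventually\<close>)
qed

lemma Omega_fst: "x \<in> Omega \<Longrightarrow> 0 < fst x \<and> fst x < 1"
  unfolding Omega_def by (auto simp: mem_Times_iff)

lemma Omega_snd: "x \<in> Omega \<Longrightarrow> 0 < snd x \<and> snd x < 1"
  unfolding Omega_def by (auto simp: mem_Times_iff)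

lemma diam_ge: "1 \<le> diameter Omega"
proof -
  have b: "bounded Omega" using Omega_sub bounded_cball bounded_subset by blast
  have p: "(1/20, 1/20) \<in> Omega" "(19/20, 19/20) \<in> Omega" unfolding Omega_def by auto
  have "1 \<le> dist ((1/20::real, 1/20::real)) (19/20, 19/20)"
    unfolding dist_Pair_Pair by (rule real_le_rsqrt) (simp add: dist_real_def power2_eq_square)
  also have "\<dots> \<le> diameter Omega" by (rule diameter_bounded_bound[OF b p])
  finally show ?thesis .
qed

lemma Omega_ball: "Omega \<subseteq> ball (1/2, 1/2) (diameter Omega)"
proof
  fix y assume y: "y \<in> Omega"
  have "dist (1/2::real, 1/2::real) y \<le> dist (1/2::real) (fst y) + dist (1/2::real) (snd y)"
  proof -
    have "dist (1/2::real, 1/2::real) y = dist (1/2::real, 1/2::real) (fst y, snd y)" by simp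
    also have "\<dots> = sqrt ((dist (1/2::real) (fst y))^2 + (dist (1/2::real) (snd y))^2)"
      by (rule dist_Pair_Pair)
    also have "\<dots> \<le> dist (1/2::real) (fst y) + dist (1/2::real) (snd y)"
      using sqrt_sum_squares_le_sum_abs[of "dist (1/2::real) (fst y)" "dist (1/2::real) (snd y)"] by simp
    finally show ?thesis .
  qed
  also have "\<dots> < 1" using Omega_fst[OF y] Omega_snd[OF y] by (auto simp: dist_real_def split: abs_split)
  finally show "y \<in> ball (1/2, 1/2) (diameter Omega)" using diam_ge by simp
qed

lemma L1bound1:
  fixes f :: "real \<times> real \<Rightarrow> real"
  assumes "f \<in> borel_measurable N" "integrable N (\<lambda>x. (f x)^2)"
  shows "integrable N (\<lambda>x. \<bar>f x\<bar>)"
  using L1bound(1)[of "\<lambda>_. 1" N f 1] assms intN_const by simp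

lemma L1conv1:
  fixes f :: "nat \<Rightarrow> real \<times> real \<Rightarrow> real"
  assumes "\<And>n. f n \<in> borel_measurable N" "\<And>n. integrable N (\<lambda>x. (f n x)^2)"
    and "(\<lambda>n. integral\<^sup>L N (\<lambda>x. (f n x)^2)) \<longlonglongrightarrow> 0"
  shows "(\<lambda>n. integral\<^sup>L N (\<lambda>x. \<bar>f n x\<bar>)) \<longlonglongrightarrow> 0"
  using L1conv[of "\<lambda>_. 1" N f] assms intN_const by simp

lemma sqB1:
  fixes g p :: "real \<times> real \<Rightarrow> real"
  assumes "g \<in> borel_measurable N" "p \<in> borel_measurable N"
    and "\<forall>x\<in>Omega. \<bar>p x\<bar> \<le> B" and "integrable N (\<lambda>x. (g x)^2)"
  shows "integrable N (\<lambda>x. (g x - p x)^2)"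
  using sqB[of "\<lambda>_. 1" g p 1 B] assms by simp

lemma wB:
  fixes g w :: "real \<times> real \<Rightarrow> real"
  assumes "w \<in> borel_measurable N" "g \<in> borel_measurable N"
    and "\<forall>x\<in>Omega. 0 \<le> w x \<and> w x \<le> W" and "integrable N (\<lambda>x. (g x)^2)"
  shows "integrable N (\<lambda>x. w x * (g x)^2)"
proof (rule Bochner_Integration.integrable_bound)
  show "integrable N (\<lambda>x. W * (g x)^2)" using assms(4) by simp
  show "(\<lambda>x. w x * (g x)^2) \<in> borel_measurable N" using assms(1,2) by measurable
  show "AE x in N. norm (w x * (g x)^2) \<le> norm (W * (g x)^2)"
  proof (rule AE_I2)
    fix x assume "x \<in> space N"
    then have w: "0 \<le> w x" "w x \<le> W" using assms(3) by auto
    have "w x * (g x)^2 \<le> W * (g x)^2" using w by (intro mult_right_mono) auto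
    then show "norm (w x * (g x)^2) \<le> norm (W * (g x)^2)" using w by simp
  qed
qed

theorem lemma2p4:
  fixes h :: "real \<Rightarrow> real"
  assumes "bounded (h ` {0..1})"
    and "h 0 = 0"
    and "\<forall>t\<in>{0<..1}. h t > 0"
    and "\<exists>h'. (\<forall>t\<in>{0<..1}. (h has_real_derivative h' t) (at t within {0<..1}))
               \<and> continuous_on {0<..1} h'"
    and "\<exists>C \<theta>. C > 0 \<and> 0 < \<theta> \<and> \<theta> < 1 \<and>
           (\<forall>x\<in>Omega. \<forall>r. 0 < r \<and> r \<le> diameter Omega \<longrightarrow>
              (\<integral>\<^sup>+ y. indicator (ball x r \<inter> Omega) y * ennreal (1 / h (fst y)) \<partial>lebesgue)
                \<le> ennreal (C * measure lebesgue (ball x r \<inter> Omega) powr \<theta>))"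
  shows "{u. H10 u} \<subseteq> {u. Hh10 h u} \<and> {u. Hh10 h u} \<subseteq> {u. Hh1 h u} \<inter> {u. W110 u}"
proof -
  obtain B0 where B0: "\<forall>y\<in>h ` {0..1}. norm y \<le> B0" using assms(1) bounded_iff by blast
  define M where "M = max B0 1"
  have M1: "M \<ge> 1" by (simp add: M_def)
  have hM: "\<forall>x\<in>Omega. 0 \<le> h (fst x) \<and> h (fst x) \<le> M"
  proof
    fix x assume x: "x \<in> Omega"
    then have "fst x \<in> {0..1}" using Omega_fst by fastforce
    then have "\<bar>h (fst x)\<bar> \<le> B0" using B0 by auto
    moreover have "h (fst x) > 0" using assms(3) Omega_fst[OF x] by auto
    ultimately show "0 \<le> h (fst x) \<and> h (fst x) \<le> M" by (simp add: M_def)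
  qed
  have hpos: "\<forall>x\<in>Omega. h (fst x) > 0" using assms(3) Omega_fst by fastforce
  obtain h' where h': "\<forall>t\<in>{0<..1}. (h has_real_derivative h' t) (at t within {0<..1})"
    using assms(4) by blast
  have hcont: "continuous_on {0<..1} h" using h' by (intro DERIV_continuous_on) auto
  have hfcont: "continuous_on Omega (\<lambda>x. h (fst x))"
    by (rule continuous_on_compose2[OF hcont continuous_on_fst[OF continuous_on_id]])
       (auto dest: Omega_fst)
  have hfm[measurable]: "(\<lambda>x. h (fst x)) \<in> borel_measurable N"
    by (rule continuous_imp_measurable_on_sets_lebesgue[OF hfcont Omega_sets])
  obtain C \<theta> where le: "\<forall>x\<in>Omega. \<forall>r. 0 < r \<and> r \<le> diameter Omega \<longrightarrow>
              (\<integral>\<^sup>+ y. indicator (ball x r \<inter> Omega) y * ennreal (1 / h (fst y)) \<partial>lebesgue)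
                \<le> ennreal (C * measure lebesgue (ball x r \<inter> Omega) powr \<theta>)"
    using assms(5) by blast
  have x0: "(1/2, 1/2) \<in> Omega" unfolding Omega_def by auto
  have "(\<integral>\<^sup>+ y. indicator (ball (1/2,1/2) (diameter Omega) \<inter> Omega) y * ennreal (1 / h (fst y)) \<partial>lebesgue) < \<infinity>"
  proof -
    have "0 < diameter Omega" using diam_ge by linarith
    then have "(\<integral>\<^sup>+ y. indicator (ball (1/2,1/2) (diameter Omega) \<inter> Omega) y * ennreal (1 / h (fst y)) \<partial>lebesgue)
       \<le> ennreal (C * measure lebesgue (ball (1/2,1/2) (diameter Omega) \<inter> Omega) powr \<theta>)"
      using bspec[OF le x0, rule_format, of "diameter Omega"] by simp
    from le_less_trans[OF this ennreal_less_top] show ?thesis by simp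
  qed
  moreover have eq: "ball (1/2,1/2) (diameter Omega) \<inter> Omega = Omega" using Omega_ball by blast
  moreover have "(\<integral>\<^sup>+ y. ennreal (1 / h (fst y)) \<partial>N) = (\<integral>\<^sup>+ y. ennreal (1 / h (fst y)) * indicator Omega y \<partial>lebesgue)"
    by (rule nn_integral_restrict_space) (simp add: Omega_sets)
  ultimately have fin: "(\<integral>\<^sup>+ y. ennreal (1 / h (fst y)) \<partial>N) < \<infinity>"
    by (simp add: mult.commute)
  have iinv: "integrable N (\<lambda>x. 1 / h (fst x))"
  proof (rule integrableI_nonneg)
    show "(\<lambda>x. 1 / h (fst x)) \<in> borel_measurable N" by measurable
    show "AE x in N. 0 \<le> 1 / h (fst x)" using hpos by (intro AE_I2) (auto intro: less_imp_le)
    show "(\<integral>\<^sup>+ x. ennreal (1 / h (fst x)) \<partial>N) < \<infinity>" by (rule fin)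
  qed
  have partA: "Hh10 h u" if "H10 u" for u
  proof -
    from that obtain g1 g2 \<phi> where H1: "Hh1 (\<lambda>_. 1) u" and w1: "weak_pd 1 Omega u g1"
      and w2: "weak_pd 2 Omega u g2" and L1: "Lp_on 2 Omega g1" and L2: "Lp_on 2 Omega g2"
      and tf: "\<forall>n. test_fun Omega (\<phi> n)"
      and lim: "(\<lambda>n. integral\<^sup>L N (\<lambda>x. (u x - \<phi> n x)^2) + integral\<^sup>L N (\<lambda>x. (g1 x - pd1 (\<phi> n) x)^2)
                 + integral\<^sup>L N (\<lambda>x. (g2 x - pd2 (\<phi> n) x)^2)) \<longlonglongrightarrow> 0"
      unfolding H10_def Hh10_def sint_eq by auto
    have Lu: "Lp_on 2 Omega u" using H1 by (simp add: Hh1_def)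
    have g2m[measurable]: "g2 \<in> borel_measurable N" and g2i: "integrable N (\<lambda>x. (g2 x)^2)"
      using L2 by (auto simp: Lp2_iff)
    have hg2: "integrable N (\<lambda>x. h (fst x) * (g2 x)^2)"
      by (rule wB[OF hfm g2m hM g2i])
    have L2h: "Lp_on 2 Omega (\<lambda>x. sqrt (h (fst x)) * g2 x)"
      unfolding Lp2_iff
    proof
      show "(\<lambda>x. sqrt (h (fst x)) * g2 x) \<in> borel_measurable N" by measurable
      show "integrable N (\<lambda>x. (sqrt (h (fst x)) * g2 x)^2)"
        by (rule Bochner_Integration.integrable_cong[THEN iffD1, OF refl _ hg2])
           (use hM in \<open>auto simp: power_mult_distrib\<close>)
    qed
    define A where "A n = integral\<^sup>L N (\<lambda>x. (u x - \<phi> n x)^2)" for n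
    define B where "B n = integral\<^sup>L N (\<lambda>x. (g1 x - pd1 (\<phi> n) x)^2)" for n
    define C1 where "C1 n = integral\<^sup>L N (\<lambda>x. (g2 x - pd2 (\<phi> n) x)^2)" for n
    define Ch where "Ch n = integral\<^sup>L N (\<lambda>x. h (fst x) * (g2 x - pd2 (\<phi> n) x)^2)" for n
    have A0: "A n \<ge> 0" and B0: "B n \<ge> 0" and C0: "C1 n \<ge> 0" for n
      unfolding A_def B_def C1_def by auto
    have Ch0: "Ch n \<ge> 0" for n
      unfolding Ch_def using hM by (intro integral_nonneg_AE AE_I2) auto
    have ChC: "Ch n \<le> M * C1 n" for n
    proof -
      have pm[measurable]: "pd2 (\<phi> n) \<in> borel_measurable N"
        using cont_meas test_props(3) tf by blast
      obtain Bd where Bd: "\<forall>x\<in>Omega. \<bar>pd2 (\<phi> n) x\<bar> \<le> Bd"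
        using cont_bdd test_props(3) tf by blast
      have i1: "integrable N (\<lambda>x. (g2 x - pd2 (\<phi> n) x)^2)"
        by (rule sqB1[OF g2m pm Bd g2i])
      have i2: "integrable N (\<lambda>x. h (fst x) * (g2 x - pd2 (\<phi> n) x)^2)"
        by (rule wB[OF hfm _ hM i1]) measurable
      have "Ch n \<le> integral\<^sup>L N (\<lambda>x. M * (g2 x - pd2 (\<phi> n) x)^2)"
        unfolding Ch_def using i1 i2 hM
        by (intro integral_mono) (auto intro!: mult_right_mono)
      also have "\<dots> = M * C1 n" unfolding C1_def by simp
      finally show ?thesis .
    qed
    have limA: "(\<lambda>n. A n + B n + C1 n) \<longlonglongrightarrow> 0" using lim unfolding A_def B_def C1_def .
    have "(\<lambda>n. A n + B n + Ch n) \<longlonglongrightarrow> 0"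
    proof (rule tendsto_sandwich[OF _ _ tendsto_const])
      show "\<forall>\<^sub>F n in sequentially. 0 \<le> A n + B n + Ch n"
        using A0 B0 Ch0 by (intro always_eventually) (auto intro: add_nonneg_nonneg)
      show "\<forall>\<^sub>F n in sequentially. A n + B n + Ch n \<le> M * (A n + B n + C1 n)"
      proof (intro always_eventually allI)
        fix n
        have "A n \<le> M * A n" "B n \<le> M * B n" using M1 A0[of n] B0[of n]
          by (auto intro: mult_right_mono[of 1 M, simplified])
        then show "A n + B n + Ch n \<le> M * (A n + B n + C1 n)" using ChC[of n]
          by (simp add: distrib_left)
      qed
      show "(\<lambda>n. M * (A n + B n + C1 n)) \<longlonglongrightarrow> 0"
        using tendsto_mult_right_zero[OF limA] by simp
    qed
    then show ?thesis
      unfolding Hh10_def Hh1_def sint_eq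
      using Lu w1 w2 L1 L2h tf unfolding A_def B_def Ch_def by blast
  qed
  have partB: "Hh1 h u \<and> W110 u" if "Hh10 h u" for u
  proof -
    from that obtain g1 g2 \<phi> where H1: "Hh1 h u" and w1: "weak_pd 1 Omega u g1"
      and w2: "weak_pd 2 Omega u g2" and L1: "Lp_on 2 Omega g1"
      and L2: "Lp_on 2 Omega (\<lambda>x. sqrt (h (fst x)) * g2 x)"
      and tf: "\<forall>n. test_fun Omega (\<phi> n)"
      and lim: "(\<lambda>n. integral\<^sup>L N (\<lambda>x. (u x - \<phi> n x)^2) + integral\<^sup>L N (\<lambda>x. (g1 x - pd1 (\<phi> n) x)^2)
                 + integral\<^sup>L N (\<lambda>x. h (fst x) * (g2 x - pd2 (\<phi> n) x)^2)) \<longlonglongrightarrow> 0"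
      unfolding Hh10_def sint_eq by auto
    have um[measurable]: "u \<in> borel_measurable N" and ui: "integrable N (\<lambda>x. (u x)^2)"
      using H1 by (auto simp: Hh1_def Lp2_iff)
    have g1m[measurable]: "g1 \<in> borel_measurable N" and g1i: "integrable N (\<lambda>x. (g1 x)^2)"
      using L1 by (auto simp: Lp2_iff)
    have sg2m: "(\<lambda>x. sqrt (h (fst x)) * g2 x) \<in> borel_measurable N"
      and sg2i: "integrable N (\<lambda>x. (sqrt (h (fst x)) * g2 x)^2)"
      using L2 by (auto simp: Lp2_iff)
    have g2m[measurable]: "g2 \<in> borel_measurable N"
    proof -
      have "(\<lambda>x. (sqrt (h (fst x)) * g2 x) / sqrt (h (fst x))) \<in> borel_measurable N"
        using sg2m by measurable
      moreover have "\<forall>x\<in>space N. (sqrt (h (fst x)) * g2 x) / sqrt (h (fst x)) = g2 x"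
        using hpos by auto
      ultimately show ?thesis using measurable_cong by (smt (verit))
    qed
    have hg2: "integrable N (\<lambda>x. h (fst x) * (g2 x)^2)"
      by (rule Bochner_Integration.integrable_cong[THEN iffD1, OF refl _ sg2i])
         (use hM in \<open>auto simp: power_mult_distrib\<close>)
    have hpos': "\<forall>x\<in>space N. h (fst x) > 0" using hpos by simp
    have Lp1u: "Lp_on 1 Omega u" unfolding Lp1_iff using L1bound1[OF um ui] by simp
    have Lp1g1: "Lp_on 1 Omega g1" unfolding Lp1_iff using L1bound1[OF g1m g1i] by simp
    have Lp1g2: "Lp_on 1 Omega g2" unfolding Lp1_iff
      using L1bound(1)[OF hfm hpos' iinv g2m hg2, of 1] by simp
    have pm0[measurable]: "\<phi> n \<in> borel_measurable N" for n
      using cont_meas test_props(1) tf by blast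
    have pm1[measurable]: "pd1 (\<phi> n) \<in> borel_measurable N" for n
      using cont_meas test_props(2) tf by blast
    have pm2[measurable]: "pd2 (\<phi> n) \<in> borel_measurable N" for n
      using cont_meas test_props(3) tf by blast
    have iA: "integrable N (\<lambda>x. (u x - \<phi> n x)^2)" for n
    proof -
      obtain Bd where Bd: "\<forall>x\<in>Omega. \<bar>\<phi> n x\<bar> \<le> Bd" using cont_bdd test_props(1) tf by blast
      show ?thesis by (rule sqB1[OF um pm0 Bd ui])
    qed
    have iB: "integrable N (\<lambda>x. (g1 x - pd1 (\<phi> n) x)^2)" for n
    proof -
      obtain Bd where Bd: "\<forall>x\<in>Omega. \<bar>pd1 (\<phi> n) x\<bar> \<le> Bd" using cont_bdd test_props(2) tf by blast
      show ?thesis by (rule sqB1[OF g1m pm1 Bd g1i])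
    qed
    have iC: "integrable N (\<lambda>x. h (fst x) * (g2 x - pd2 (\<phi> n) x)^2)" for n
    proof -
      obtain Bd where Bd: "\<forall>x\<in>Omega. \<bar>pd2 (\<phi> n) x\<bar> \<le> Bd" using cont_bdd test_props(3) tf by blast
      show ?thesis by (rule sqB[OF hfm g2m pm2 hM Bd hg2])
    qed
    have A0: "integral\<^sup>L N (\<lambda>x. (u x - \<phi> n x)^2) \<ge> 0" for n by simp
    have B0: "integral\<^sup>L N (\<lambda>x. (g1 x - pd1 (\<phi> n) x)^2) \<ge> 0" for n by simp
    have C0: "integral\<^sup>L N (\<lambda>x. h (fst x) * (g2 x - pd2 (\<phi> n) x)^2) \<ge> 0" for n
      using hM by (intro integral_nonneg_AE AE_I2) auto
    note parts = tendsto_part[OF A0 B0 C0 lim]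
    have lA: "(\<lambda>n. integral\<^sup>L N (\<lambda>x. \<bar>u x - \<phi> n x\<bar>)) \<longlonglongrightarrow> 0"
      by (rule L1conv1[of "\<lambda>n x. u x - \<phi> n x", OF _ iA parts(1)]) measurable
    have lB: "(\<lambda>n. integral\<^sup>L N (\<lambda>x. \<bar>g1 x - pd1 (\<phi> n) x\<bar>)) \<longlonglongrightarrow> 0"
      by (rule L1conv1[of "\<lambda>n x. g1 x - pd1 (\<phi> n) x", OF _ iB parts(2)]) measurable
    have lC: "(\<lambda>n. integral\<^sup>L N (\<lambda>x. \<bar>g2 x - pd2 (\<phi> n) x\<bar>)) \<longlonglongrightarrow> 0"
      by (rule L1conv[of "\<lambda>x. h (fst x)" N "\<lambda>n x. g2 x - pd2 (\<phi> n) x", OF hfm hpos' iinv _ iC parts(3)])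
         measurable
    have "W110 u"
      unfolding W110_def sint_eq
      using Lp1u w1 w2 Lp1g1 Lp1g2 tf tendsto_add[OF tendsto_add[OF lA lB] lC] by auto
    then show ?thesis using H1 by blast
  qed
  show ?thesis using partA partB by blast
qed

end
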